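(* Let $X$ be a real reflexive Banach space, let $h\in\mathcal{H}$ and $(x,x^{\ast})\in X\times X^{\ast}$. If $\max\{(\mathcal{A}h)(x,x^{\ast}),((\mathcal{A}h)^{\ast}\circ i)(x,x^{\ast})\}=+\infty$, then $(\mathcal{A}^{\infty}h)(x,x^{\ast})=+\infty$. If $\max\{(\mathcal{A}h)(x,x^{\ast}),((\mathcal{A}h)^{\ast}\circ i)(x,x^{\ast})\}<+\infty$, $\epsilon>0$, and $n$ is an integer with $n>1+\log_2\big((\mathcal{A}h)(x,x^{\ast})-((\mathcal{A}h)^{\ast}\circ i)(x,x^{\ast})\big)-\log_2\epsilon$, then $(\mathcal{A}^n h)(x,x^{\ast})-\epsilon\le(\mathcal{A}^{\infty}h)(x,x^{\ast})$.
   Context: $X^{\ast}$ is the dual of $X$ with pairing $\langle\cdot,\cdot\rangle$. The dual of $X\times X^{\ast}$ is identified with $X^{\ast}\times X$ via $\langle (x,x^{\ast}),(y^{\ast},y)\rangle=\langle x,y^{\ast}\rangle+\langle y,x^{\ast}\rangle$; for $g:X\times X^{\ast}\to\mathbb{R}\cup\{+\infty\}$, $g^{\ast}(y^{\ast},y)=\sup_{(z,z^{\ast})}\{\langle z,y^{\ast}\rangle+\langle y,z^{\ast}\rangle-g(z,z^{\ast})\}$, and $i(z,z^{\ast})=(z^{\ast},z)$. For a maximally monotone $T:X\rightrightarrows X^{\ast}$, $\mathcal{H}(T)$ is the family of lower semicontinuous convex functions $h:X\times X^{\ast}\to\mathbb{R}\cup\{+\infty\}$ with $h(z,z^{\ast})\ge\langle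 z,z^{\ast}\rangle$ everywhere and $h(z,z^{\ast})=\langle z,z^{\ast}\rangle$ whenever $z^{\ast}\in T(z)$; $\mathcal{H}$ is the union of $\mathcal{H}(T)$ over all maximally monotone $T$. $\mathcal{A}h:=\tfrac12(h+h^{\ast}\circ i)$, $\mathcal{A}^n$ is its $n$-th iterate, and $\mathcal{A}^{\infty}h$ is the pointwise limit (equivalently infimum) of the pointwise non-increasing sequence $\{\mathcal{A}^n h\}_{n\ge1}$. The convention $\log_2 0=-\infty$ applies. *)

theory Defs
  imports "HOL-Analysis.Analysis"
begin

(* X is a real Banach space of type 'a; its dual X* is the type of bounded linear
   functionals 'a => real (blinfun); the pairing is blinfun_apply xs x. *)

definition reflexive_space :: "'a::banach itself \<Rightarrow> bool" where
  "reflexive_space _ \<longleftrightarrow>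
     (\<forall>\<phi> :: ('a \<Rightarrow>\<^sub>L real) \<Rightarrow>\<^sub>L real. \<exists>x::'a. \<forall>f. blinfun_apply \<phi> f = blinfun_apply f x)"

definition pairing :: "'a::real_normed_vector \<Rightarrow> ('a \<Rightarrow>\<^sub>L real) \<Rightarrow> real" where
  "pairing x xs = blinfun_apply xs x"

definition monotone_op :: "('a::real_normed_vector \<Rightarrow> ('a \<Rightarrow>\<^sub>L real) set) \<Rightarrow> bool" where
  "monotone_op T \<longleftrightarrow> (\<forall>x y xs ys. xs \<in> T x \<longrightarrow> ys \<in> T y \<longrightarrow> pairing (x - y) (xs - ys) \<ge> 0)"

definition maximal_monotone :: "('a::real_normed_vector \<Rightarrow> ('a \<Rightarrow>\<^sub>L real) set) \<Rightarrow> bool" where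
  "maximal_monotone T \<longleftrightarrow> monotone_op T \<and>
     (\<forall>S. monotone_op S \<longrightarrow> (\<forall>x. T x \<subseteq> S x) \<longrightarrow> S = T)"

definition lsc_fun :: "('b::topological_space \<Rightarrow> ereal) \<Rightarrow> bool" where
  "lsc_fun g \<longleftrightarrow> (\<forall>c::real. closed {z. g z \<le> ereal c})"

definition convex_fun :: "('b::real_vector \<Rightarrow> ereal) \<Rightarrow> bool" where
  "convex_fun g \<longleftrightarrow> convex {(z, r::real). g z \<le> ereal r}"

definition HT :: "('a::real_normed_vector \<Rightarrow> ('a \<Rightarrow>\<^sub>L real) set) \<Rightarrow> ('a \<times> ('a \<Rightarrow>\<^sub>L real) \<Rightarrow> ereal) set" where
  "HT T = {h. lsc_fun h \<and> convex_fun h \<and>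
      (\<forall>z zs. h (z, zs) \<ge> ereal (pairing z zs)) \<and>
      (\<forall>z zs. zs \<in> T z \<longrightarrow> h (z, zs) = ereal (pairing z zs))}"

definition HH :: "('a::real_normed_vector \<times> ('a \<Rightarrow>\<^sub>L real) \<Rightarrow> ereal) set" where
  "HH = (\<Union>T\<in>{T. maximal_monotone T}. HT T)"

(* Fenchel conjugate on X x X*, with dual identified with X* x X. *)
definition fconj :: "('a::real_normed_vector \<times> ('a \<Rightarrow>\<^sub>L real) \<Rightarrow> ereal) \<Rightarrow> (('a \<Rightarrow>\<^sub>L real) \<times> 'a \<Rightarrow> ereal)" where
  "fconj g = (\<lambda>(ys, y). SUP p. ereal (pairing (fst p) ys + pairing y (snd p)) - g p)"

definition iswap :: "'a \<times> 'b \<Rightarrow> 'b \<times> 'a" where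
  "iswap = (\<lambda>(z, zs). (zs, z))"

definition opA :: "('a::real_normed_vector \<times> ('a \<Rightarrow>\<^sub>L real) \<Rightarrow> ereal) \<Rightarrow> ('a \<times> ('a \<Rightarrow>\<^sub>L real) \<Rightarrow> ereal)" where
  "opA h = (\<lambda>p. ereal (1/2) * (h p + (fconj h \<circ> iswap) p))"

definition opA_inf :: "('a::real_normed_vector \<times> ('a \<Rightarrow>\<^sub>L real) \<Rightarrow> ereal) \<Rightarrow> ('a \<times> ('a \<Rightarrow>\<^sub>L real) \<Rightarrow> ereal)" where
  "opA_inf h = (\<lambda>p. INF n\<in>{1..}. (opA ^^ n) h p)"

end

theory Submission imports Defs begin

lemma e1: fixes S K :: ereal and c :: real
  assumes "ereal c - K \<le> S" shows "ereal c - S \<le> K"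
  using assms by (cases S; cases K) auto

lemma e2: fixes a b A B :: ereal and c :: real
  assumes "ereal c - a \<le> A" "ereal c - b \<le> B"
  shows "ereal c - ereal (1/2) * (a + b) \<le> ereal (1/2) * (A + B)"
  using assms by (cases a; cases b; cases A; cases B) (auto simp: field_simps)

lemma e3: fixes a b :: ereal assumes "b \<le> a" shows "ereal (1/2) * (a + b) \<le> a"
  using assms by (cases a; cases b) auto

lemma e4: fixes a b c :: ereal assumes "b \<le> c" shows "ereal (1/2) * (a + b) \<le> ereal (1/2) * (a + c)"
  by (simp add: add_left_mono assms ereal_mult_left_mono)

lemma fconj_term: "ereal (pairing (fst p) ys + pairing y (snd p)) - g p \<le> fconj g (ys, y)"
  unfolding fconj_def by (auto intro: SUP_upper)

lemma conj_anti: assumes "\<And>q. f q \<le> f' q" shows "fconj f' v \<le> fconj f v"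
  unfolding fconj_def
  by (cases v) (auto intro!: SUP_mono ereal_minus_mono assms)

lemma bicon: "fconj (fconj k \<circ> iswap) (iswap p) \<le> k p"
proof -
  obtain x xs where p: "p = (x, xs)" by (cases p)
  show ?thesis unfolding p iswap_def
    apply (simp add: fconj_def[of "fconj k \<circ> _"])
    apply (rule SUP_least)
    subgoal for q
      apply (cases q)
      apply (simp add: iswap_def)
      apply (rule e1)
      using fconj_term[of "(x,xs)" _ _ k]
      by (simp add: add.commute)
    done
qed

lemma avg: "fconj (\<lambda>q. ereal (1/2) * (a q + b q)) v \<le> ereal (1/2) * (fconj a v + fconj b v)"
proof -
  obtain ys y where v: "v = (ys, y)" by (cases v)
  show ?thesis unfolding v
    apply (subst fconj_def)
    apply simp
    apply (rule SUP_least)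
    apply (rule e2)
    by (rule fconj_term)+
qed

lemma G_le_F: "fconj (opA k) (iswap p) \<le> opA k p"
proof -
  have "fconj (opA k) (iswap p) \<le> ereal (1/2) * (fconj k (iswap p) + fconj (fconj k \<circ> iswap) (iswap p))"
    unfolding opA_def by (rule avg)
  also have "\<dots> \<le> ereal (1/2) * (fconj k (iswap p) + k p)"
    by (rule e4[OF bicon])
  also have "\<dots> = opA k p" by (simp add: opA_def add.commute)
  finally show ?thesis .
qed

lemma F_dec: "opA (opA k) p \<le> opA k p"
proof -
  have "opA (opA k) p = ereal (1/2) * (opA k p + fconj (opA k) (iswap p))"
    by (simp add: opA_def[of "opA k"])
  also have "\<dots> \<le> opA k p" by (rule e3[OF G_le_F])
  finally show ?thesis .
qed

theorem theorem2p4: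
  fixes h :: "'a::banach \<times> ('a \<Rightarrow>\<^sub>L real) \<Rightarrow> ereal"
    and x :: 'a and xs :: "'a \<Rightarrow>\<^sub>L real"
  assumes "reflexive_space TYPE('a)"
    and "h \<in> HH"
  shows "(max (opA h (x, xs)) ((fconj (opA h) \<circ> iswap) (x, xs)) = \<infinity>
            \<longrightarrow> opA_inf h (x, xs) = \<infinity>)
       \<and> (\<forall>(\<epsilon>::real) (n::nat).
            max (opA h (x, xs)) ((fconj (opA h) \<circ> iswap) (x, xs)) < \<infinity>
            \<longrightarrow> \<epsilon> > 0 \<longrightarrow> n \<ge> 1
            \<longrightarrow> (let d = real_of_ereal (opA h (x, xs) - (fconj (opA h) \<circ> iswap) (x, xs))
                 in d = 0 \<or> (d > 0 \<and> real n > 1 + log 2 d - log 2 \<epsilon>))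
            \<longrightarrow> (opA ^^ n) h (x, xs) - ereal \<epsilon> \<le> opA_inf h (x, xs))"
proof -
  define p where "p = (x, xs)"
  define F where "F n = (opA ^^ n) h" for n
  define a where "a n = F n p" for n
  define b where "b n = fconj (F n) (iswap p)" for n
  have FS: "F (Suc n) = opA (F n)" for n by (simp add: F_def)
  have F1: "F 1 = opA h" by (simp only: F_def One_nat_def funpow.simps comp_apply id_apply)
  have baS: "b (Suc m) \<le> a (Suc m)" for m
    unfolding a_def b_def FS by (rule G_le_F)
  have ba: "b n \<le> a n" if "n \<ge> 1" for n
    using baS[of "n - 1"] that by simp
  have rec: "a (Suc n) = ereal (1/2) * (a n + b n)" for n
    unfolding a_def b_def FS by (simp only: opA_def comp_def)
  have FdecS: "F (Suc (Suc m)) q \<le> F (Suc m) q" for m q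
    unfolding FS by (rule F_dec)
  have Fdec1: "F (Suc n) q \<le> F n q" if "n \<ge> 1" for n q
    using FdecS[of "n - 1" q] that by simp
  have Fdec: "F m q \<le> F n q" if "1 \<le> n" "n \<le> m" for n m q
    using that(2)
  proof (induction m rule: dec_induct)
    case base then show ?case by simp
  next
    case (step k)
    then show ?case using Fdec1[of k q] that(1) by (meson order.trans)
  qed
  have binc: "b n \<le> b m" if "1 \<le> n" "n \<le> m" for n m
    unfolding b_def by (rule conj_anti) (rule Fdec[OF that])
  have adec: "a m \<le> a n" if "1 \<le> n" "n \<le> m" for n m
    unfolding a_def by (rule Fdec[OF that])
  have infeq: "opA_inf h p = (INF m\<in>{1..}. a m)"
    by (simp add: opA_inf_def a_def F_def)
  have inf_ge_b: "b n \<le> opA_inf h p" if "n \<ge> 1" for n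
    unfolding infeq
  proof (rule INF_greatest)
    fix m assume m: "m \<in> {1::nat..}"
    show "b n \<le> a m"
    proof (cases "m \<le> n")
      case True
      then show ?thesis using ba[OF that] adec[of m n] m by auto
    next
      case False
      then have "n \<le> m" by simp
      then show ?thesis using ba[of m] binc[OF that \<open>n \<le> m\<close>] m
        by simp
    qed
  qed
  have a1: "opA h (x, xs) = a 1" unfolding a_def F1 p_def by (rule refl)
  have b1: "(fconj (opA h) \<circ> iswap) (x, xs) = b 1" unfolding b_def F1 p_def comp_def by (rule refl)
  have part1: "opA_inf h p = \<infinity>" if "max (a 1) (b 1) = \<infinity>"
  proof -
    have "b 1 \<le> a 1" by (rule ba) (rule order_refl)
    then have "max (a 1) (b 1) = a 1" by (rule max_absorb1)
    then have "a 1 = \<infinity>" using that by (rule subst)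
    then have "a (Suc 0) = \<infinity>" by (simp only: One_nat_def)
    then have ainf: "a (Suc k) = \<infinity>" for k
    proof (induction k)
      case 0 then show ?case .
    next
      case (Suc k)
      have "a (Suc (Suc k)) = ereal (1/2) * (a (Suc k) + b (Suc k))" by (rule rec)
      then show ?case using Suc by simp
    qed
    have am: "a m = \<infinity>" if "m \<in> {1..}" for m
    proof -
      have "m = Suc (m - 1)" using that by simp
      then show ?thesis using ainf[of "m - 1"] by (rule ssubst)
    qed
    have ne: "{1::nat..} \<noteq> {}" by auto
    show ?thesis unfolding infeq by (rule INF_eq_const[OF ne am])
  qed
  have a1fin: "a 1 < \<infinity>" and b1fin: "b 1 < \<infinity>" if "max (a 1) (b 1) < \<infinity>"
    using that by auto
  have b1ninf: "b 1 \<noteq> -\<infinity>" if "a 1 < \<infinity>"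
  proof
    assume B: "b 1 = -\<infinity>"
    have "ereal (pairing (fst p) xs + pairing x (snd p)) - F 1 p \<le> fconj (F 1) (xs, x)"
      by (rule fconj_term)
    also have "fconj (F 1) (xs, x) = b 1" unfolding b_def p_def iswap_def by simp
    finally have "ereal (pairing (fst p) xs + pairing x (snd p)) - a 1 \<le> -\<infinity>"
      unfolding B a_def .
    then have "a 1 = \<infinity>" by (cases "a 1") auto
    then show False using that by simp
  qed
  show ?thesis
  proof (intro conjI allI impI)
    assume H: "max (opA h (x, xs)) ((fconj (opA h) \<circ> iswap) (x, xs)) = \<infinity>"
    have "max (a 1) (b 1) = \<infinity>" using H unfolding a1 b1 .
    then have "opA_inf h p = \<infinity>" by (rule part1)
    then show "opA_inf h (x, xs) = \<infinity>" unfolding p_def .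
  next
    fix \<epsilon> :: real and n :: nat
    assume M: "max (opA h (x, xs)) ((fconj (opA h) \<circ> iswap) (x, xs)) < \<infinity>"
      and e: "\<epsilon> > 0" and n: "n \<ge> 1"
      and D: "let d = real_of_ereal (opA h (x, xs) - (fconj (opA h) \<circ> iswap) (x, xs))
                 in d = 0 \<or> (d > 0 \<and> real n > 1 + log 2 d - log 2 \<epsilon>)"
    have M': "max (a 1) (b 1) < \<infinity>" using M unfolding a1 b1 .
    note af = a1fin[OF M'] and bf = b1fin[OF M']
    note bn = b1ninf[OF af]
    define \<alpha> where "\<alpha> k = real_of_ereal (a k)" for k
    define \<beta> where "\<beta> k = real_of_ereal (b k)" for k
    have bnd: "b 1 \<le> b (Suc k) \<and> b (Suc k) \<le> a (Suc k) \<and> a (Suc k) \<le> a 1" for k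
      using binc[of 1 "Suc k"] ba[of "Suc k"] adec[of 1 "Suc k"] by simp
    have afin: "a (Suc k) = ereal (\<alpha> (Suc k))" for k
    proof -
      have "a (Suc k) \<noteq> \<infinity>" using bnd[of k] af by auto
      moreover have "a (Suc k) \<noteq> -\<infinity>" using bnd[of k] bn by auto
      ultimately show ?thesis unfolding \<alpha>_def by (cases "a (Suc k)") auto
    qed
    have bfin: "b (Suc k) = ereal (\<beta> (Suc k))" for k
    proof -
      have "b (Suc k) \<noteq> \<infinity>" using bnd[of k] af by auto
      moreover have "b (Suc k) \<noteq> -\<infinity>" using bnd[of k] bn by auto
      ultimately show ?thesis unfolding \<beta>_def by (cases "b (Suc k)") auto
    qed
    have arec: "\<alpha> (Suc (Suc k)) = (\<alpha> (Suc k) + \<beta> (Suc k)) / 2" for k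
    proof -
      have "ereal (\<alpha> (Suc (Suc k))) = ereal (1/2) * (ereal (\<alpha> (Suc k)) + ereal (\<beta> (Suc k)))"
        using rec[of "Suc k"] unfolding afin bfin .
      then show ?thesis by simp
    qed
    have binc': "\<beta> (Suc k) \<le> \<beta> (Suc (Suc k))" for k
      using binc[of "Suc k" "Suc (Suc k)"] unfolding bfin by simp
    have key: "\<alpha> (Suc k) - \<beta> (Suc k) \<le> (\<alpha> 1 - \<beta> 1) / 2 ^ k" for k
    proof (induction k)
      case 0 then show ?case by simp
    next
      case (Suc k)
      have "\<alpha> (Suc (Suc k)) - \<beta> (Suc (Suc k)) \<le> (\<alpha> (Suc k) - \<beta> (Suc k)) / 2"
        using arec[of k] binc'[of k] by simp
      also have "\<dots> \<le> (\<alpha> 1 - \<beta> 1) / 2 ^ k / 2" by (rule divide_right_mono[OF Suc.IH]) simp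
      finally show ?case by (simp add: field_simps)
    qed
    have dval: "real_of_ereal (opA h (x, xs) - (fconj (opA h) \<circ> iswap) (x, xs)) = \<alpha> 1 - \<beta> 1"
      unfolding a1 b1 using afin[of 0] bfin[of 0] by simp
    obtain k where k: "n = Suc k" using n by (metis One_nat_def Suc_le_D)
    have small: "(\<alpha> 1 - \<beta> 1) / 2 ^ k \<le> \<epsilon>"
    proof (cases "\<alpha> 1 - \<beta> 1 = 0")
      case True then show ?thesis using e by simp
    next
      case False
      define d where "d = \<alpha> 1 - \<beta> 1"
      have dp: "d > 0" and lg: "real n > 1 + log 2 d - log 2 \<epsilon>"
        using D False unfolding Let_def dval d_def by auto
      have "log 2 (d / \<epsilon>) < real k" using lg dp e k by (simp add: log_divide)
      then have "2 powr (log 2 (d / \<epsilon>)) < 2 powr (real k)" by (rule powr_less_mono) simp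
      then have "d / \<epsilon> < 2 ^ k" using dp e by (simp add: powr_realpow)
      then have "d < \<epsilon> * 2 ^ k" using e by (simp add: field_simps)
      then show ?thesis unfolding d_def[symmetric] by (simp add: field_simps)
    qed
    have an: "(opA ^^ n) h (x, xs) = a n" unfolding a_def F_def p_def by (rule refl)
    have "ereal (\<alpha> n) - ereal \<epsilon> \<le> ereal (\<beta> n)"
      using key[of k] small k by simp
    then have "a n - ereal \<epsilon> \<le> b n" using afin[of k] bfin[of k] k by simp
    also have "b n \<le> opA_inf h p" by (rule inf_ge_b[OF n])
    finally show "(opA ^^ n) h (x, xs) - ereal \<epsilon> \<le> opA_inf h (x, xs)"
      unfolding an p_def .
  qed
qed

end
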